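(* For a (nondegenerate) triangle $AB\Gamma$, let $\ell_1$ be the line perpendicular to $AB$ through $B$, $\ell_2$ the line perpendicular to $B\Gamma$ through $\Gamma$, and $\ell_3$ the line perpendicular to $\Gamma A$ through $A$, and let $A'B'\Gamma'$ be the triangle bounded by these three lines. Let $E$ and $E'$ be the areas of $AB\Gamma$ and $A'B'\Gamma'$. Then, over all triangles $AB\Gamma$, the ratio $E'/E$ has minimum value $3$, and $E'/E = 3$ holds if and only if $AB\Gamma$ is equilateral (in which case $A'B'\Gamma'$ is also equilateral). *)

theory Defs
  imports "HOL-Analysis.Analysis"
begin

definition tri_area :: "real^2 \<Rightarrow> real^2 \<Rightarrow> real^2 \<Rightarrow> real" where
  "tri_area P Q R =
     \<bar>(Q$1 - P$1) * (R$2 - P$2) - (Q$2 - P$2) * (R$1 - P$1)\<bar> / 2"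

definition perp_line_at :: "real^2 \<Rightarrow> real^2 \<Rightarrow> (real^2) set" where
  "perp_line_at X Y = {Z. (Z - Y) \<bullet> (Y - X) = 0}"

definition equilateral :: "real^2 \<Rightarrow> real^2 \<Rightarrow> real^2 \<Rightarrow> bool" where
  "equilateral P Q R \<longleftrightarrow> dist P Q = dist Q R \<and> dist Q R = dist R P"

end

theory Submission
  imports Defs
begin

lemma inner2: "(x::real^2) \<bullet> y = x$1*y$1 + x$2*y$2"
  by (simp add: inner_vec_def sum_2)
lemma dist2: "(dist (x::real^2) y)^2 = (x$1-y$1)^2 + (x$2-y$2)^2"
proof -
  have "(dist x y)^2 = (x-y)\<bullet>(x-y)" by (simp add: dist_norm power2_norm_eq_inner)
  then show ?thesis by (simp add: inner2 power2_eq_square)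
qed
lemma collinear2:
  fixes A B C :: "real^2"
  shows "collinear {A,B,C} \<longleftrightarrow> (B$1-A$1)*(C$2-A$2) - (B$2-A$2)*(C$1-A$1) = 0"
proof -
  have "collinear {A,B,C} \<longleftrightarrow> A = C \<or> (\<exists>u. B = u *\<^sub>R A + (1 - u) *\<^sub>R C)"
    by (rule collinear_3_expand)
  also have "\<dots> \<longleftrightarrow> (B$1-A$1)*(C$2-A$2) - (B$2-A$2)*(C$1-A$1) = 0"
  proof
    assume "A = C \<or> (\<exists>u. B = u *\<^sub>R A + (1 - u) *\<^sub>R C)"
    then show "(B$1-A$1)*(C$2-A$2) - (B$2-A$2)*(C$1-A$1) = 0"
    proof
      assume "A = C" then show ?thesis by simp
    next
      assume "\<exists>u. B = u *\<^sub>R A + (1 - u) *\<^sub>R C"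
      then obtain u where "B = u *\<^sub>R A + (1 - u) *\<^sub>R C" by blast
      then have "B$1 = u*A$1 + (1-u)*C$1" "B$2 = u*A$2 + (1-u)*C$2" by simp_all
      then show ?thesis by algebra
    qed
  next
    assume H: "(B$1-A$1)*(C$2-A$2) - (B$2-A$2)*(C$1-A$1) = 0"
    show "A = C \<or> (\<exists>u. B = u *\<^sub>R A + (1 - u) *\<^sub>R C)"
    proof (cases "A = C")
      case True then show ?thesis by simp
    next
      case False
      show ?thesis
      proof (cases "A$1 = C$1")
        case True
        with False have ne: "A$2 \<noteq> C$2" by (metis exhaust_2 vec_eq_iff)
        define u where "u = (B$2-C$2)/(A$2-C$2)"
        have "(B$1 - C$1)*(A$2-C$2) = 0" using H True by algebra
        hence b1: "B$1 = C$1" using ne by simp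
        have "u*(A$2-C$2) = B$2-C$2" unfolding u_def using ne by simp
        hence "B$2 = u*A$2 + (1-u)*C$2" by (simp add: algebra_simps)
        with b1 have "B = u *\<^sub>R A + (1 - u) *\<^sub>R C"
          using True by (simp add: vec_eq_iff forall_2 algebra_simps)
        then show ?thesis by blast
      next
        case ne: False
        define u where "u = (B$1-C$1)/(A$1-C$1)"
        have "u*(A$1-C$1) = B$1-C$1" unfolding u_def using ne by simp
        hence "B$1 = u*A$1 + (1-u)*C$1" by (simp add: algebra_simps)
        moreover have "B$2 = u*A$2 + (1-u)*C$2"
        proof -
          have "(B$2 - C$2)*(A$1-C$1) = (B$1-C$1)*(A$2-C$2)" using H by algebra
          note eq = this
          have "u*(A$2-C$2) = (B$1-C$1)*(A$2-C$2)/(A$1-C$1)" unfolding u_def by simp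
          also have "\<dots> = (B$2-C$2)*(A$1-C$1)/(A$1-C$1)" using eq by simp
          also have "\<dots> = B$2-C$2" using ne by simp
          finally have "u*(A$2-C$2) = B$2-C$2" .
          then show ?thesis by (simp add: algebra_simps)
        qed
        ultimately have "B = u *\<^sub>R A + (1 - u) *\<^sub>R C"
          by (simp add: vec_eq_iff forall_2 algebra_simps)
        then show ?thesis by blast
      qed
    qed
  qed
  finally show ?thesis .
qed

lemma alg:
  fixes x1 x2 y1 y2 u1 u2 v1 v2 w1 w2 :: real
  defines "D \<equiv> x1*y2 - x2*y1" and "P \<equiv> x1*x1+x2*x2" and "Q \<equiv> y1*y1+y2*y2"
    and "R \<equiv> x1*y1+x2*y2"
  assumes D0: "D \<noteq> 0"
    and h1: "u1*x1+u2*x2 = P" and h2: "u1*(y1-x1)+u2*(y2-x2) = Q-R"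
    and h3: "v1*(y1-x1)+v2*(y2-x2) = Q-R" and h4: "v1*y1+v2*y2 = 0"
    and h5: "w1*y1+w2*y2 = 0" and h6: "w1*x1+w2*x2 = P"
  shows "((v1-u1)*(w2-u2)-(v2-u2)*(w1-u1))*D = (P+Q-R)^2"
    "D^2*((v1-w1)^2+(v2-w2)^2) = (P+Q-R)^2*Q"
    "D^2*((u1-v1)^2+(u2-v2)^2) = (P+Q-R)^2*((y1-x1)^2+(y2-x2)^2)"
    "D^2*((u1-w1)^2+(u2-w2)^2) = (P+Q-R)^2*P"
proof -
  have "D*u1 = (u1*x1+u2*x2)*(y2-x2) - (u1*(y1-x1)+u2*(y2-x2))*x2" unfolding D_def by algebra
  hence e1: "D*u1 = P*(y2-x2) - (Q-R)*x2" unfolding h1 h2 .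
  have "D*u2 = x1*(u1*(y1-x1)+u2*(y2-x2)) - (y1-x1)*(u1*x1+u2*x2)" unfolding D_def by algebra
  hence e2: "D*u2 = x1*(Q-R) - (y1-x1)*P" unfolding h1 h2 .
  have "D* v1 = -(v1*(y1-x1)+v2*(y2-x2))*y2 + (v1*y1+v2*y2)*(y2-x2)" unfolding D_def by algebra
  hence e3: "D* v1 = -(Q-R)*y2" unfolding h3 h4 by simp
  have "D* v2 = (v1*(y1-x1)+v2*(y2-x2))*y1 - (v1*y1+v2*y2)*(y1-x1)" unfolding D_def by algebra
  hence e4: "D* v2 = (Q-R)*y1" unfolding h3 h4 by simp
  have "D*w1 = (w1*x1+w2*x2)*y2 - (w1*y1+w2*y2)*x2" unfolding D_def by algebra
  hence e5: "D*w1 = P*y2" unfolding h5 h6 by simp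
  have "D*w2 = -(w1*x1+w2*x2)*y1 + (w1*y1+w2*y2)*x1" unfolding D_def by algebra
  hence e6: "D*w2 = -P*y1" unfolding h5 h6 by simp
  have "D^2*(((v1-u1)*(w2-u2)-(v2-u2)*(w1-u1))*D) = D^2*(P+Q-R)^2"
  proof -
    have "D^2*(((v1-u1)*(w2-u2)-(v2-u2)*(w1-u1))*D) = ((D* v1-D*u1)*(D*w2-D*u2)-(D* v2-D*u2)*(D*w1-D*u1))*D"
      by (simp add: algebra_simps power2_eq_square)
    also have "\<dots> = D^2*(P+Q-R)^2" unfolding e1 e2 e3 e4 e5 e6 unfolding D_def P_def Q_def R_def
      by algebra
    finally show ?thesis .
  qed
  then show "((v1-u1)*(w2-u2)-(v2-u2)*(w1-u1))*D = (P+Q-R)^2" using D0 by simp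
  have "D^2*((v1-w1)^2+(v2-w2)^2) = (D* v1-D*w1)^2+(D* v2-D*w2)^2" by algebra
  also have "\<dots> = (P+Q-R)^2*Q" unfolding e1 e2 e3 e4 e5 e6 unfolding D_def P_def Q_def R_def
      by algebra
  finally show "D^2*((v1-w1)^2+(v2-w2)^2) = (P+Q-R)^2*Q" .
  have "D^2*((u1-v1)^2+(u2-v2)^2) = (D*u1-D* v1)^2+(D*u2-D* v2)^2" by algebra
  also have "\<dots> = (P+Q-R)^2*((y1-x1)^2+(y2-x2)^2)" unfolding e1 e2 e3 e4 e5 e6 unfolding D_def P_def Q_def R_def
      by algebra
  finally show "D^2*((u1-v1)^2+(u2-v2)^2) = (P+Q-R)^2*((y1-x1)^2+(y2-x2)^2)" .
  have "D^2*((u1-w1)^2+(u2-w2)^2) = (D*u1-D*w1)^2+(D*u2-D*w2)^2" by algebra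
  also have "\<dots> = (P+Q-R)^2*P" unfolding e1 e2 e3 e4 e5 e6 unfolding D_def P_def Q_def R_def
      by algebra
  finally show "D^2*((u1-w1)^2+(u2-w2)^2) = (P+Q-R)^2*P" .
qed

theorem mainTheorem2:
  shows "(\<forall>A B C A' B' C' :: real^2.
            \<not> collinear {A, B, C}
            \<and> A' \<in> perp_line_at A B \<inter> perp_line_at B C
            \<and> B' \<in> perp_line_at B C \<inter> perp_line_at C A
            \<and> C' \<in> perp_line_at C A \<inter> perp_line_at A B
          \<longrightarrow> tri_area A' B' C' / tri_area A B C \<ge> 3
            \<and> (tri_area A' B' C' / tri_area A B C = 3 \<longleftrightarrow> equilateral A B C)
            \<and> (equilateral A B C \<longrightarrow> equilateral A' B' C'))
       \<and> (\<exists>A B C A' B' C' :: real^2.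
            \<not> collinear {A, B, C}
            \<and> A' \<in> perp_line_at A B \<inter> perp_line_at B C
            \<and> B' \<in> perp_line_at B C \<inter> perp_line_at C A
            \<and> C' \<in> perp_line_at C A \<inter> perp_line_at A B
            \<and> tri_area A' B' C' / tri_area A B C = 3)"
proof -
  have part1: "tri_area A' B' C' / tri_area A B C \<ge> 3
            \<and> (tri_area A' B' C' / tri_area A B C = 3 \<longleftrightarrow> equilateral A B C)
            \<and> (equilateral A B C \<longrightarrow> equilateral A' B' C')"
    if nc: "\<not> collinear {A, B, C}"
      and hA: "A' \<in> perp_line_at A B \<inter> perp_line_at B C"
      and hB: "B' \<in> perp_line_at B C \<inter> perp_line_at C A"
      and hC: "C' \<in> perp_line_at C A \<inter> perp_line_at A B" for A B C A' B' C' :: "real^2"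
  proof -
    define x1 where "x1 = B$1 - A$1"
    define x2 where "x2 = B$2 - A$2"
    define y1 where "y1 = C$1 - A$1"
    define y2 where "y2 = C$2 - A$2"
    define u1 where "u1 = A'$1 - A$1"
    define u2 where "u2 = A'$2 - A$2"
    define v1 where "v1 = B'$1 - A$1"
    define v2 where "v2 = B'$2 - A$2"
    define w1 where "w1 = C'$1 - A$1"
    define w2 where "w2 = C'$2 - A$2"
    define D where "D = x1*y2 - x2*y1"
    define P where "P = x1*x1+x2*x2"
    define Q where "Q = y1*y1+y2*y2"
    define R where "R = x1*y1+x2*y2"
    define K where "K = P+Q-R"
    have D0: "D \<noteq> 0" using nc unfolding collinear2 D_def x1_def x2_def y1_def y2_def by simp
    have p1: "(A'$1-B$1)*(B$1-A$1)+(A'$2-B$2)*(B$2-A$2) = 0"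
         and p2: "(A'$1-C$1)*(C$1-B$1)+(A'$2-C$2)*(C$2-B$2) = 0"
      using hA by (auto simp: perp_line_at_def inner2)
    have p3: "(B'$1-C$1)*(C$1-B$1)+(B'$2-C$2)*(C$2-B$2) = 0"
         and p4: "(B'$1-A$1)*(A$1-C$1)+(B'$2-A$2)*(A$2-C$2) = 0"
      using hB by (auto simp: perp_line_at_def inner2)
    have p5: "(C'$1-A$1)*(A$1-C$1)+(C'$2-A$2)*(A$2-C$2) = 0"
         and p6: "(C'$1-B$1)*(B$1-A$1)+(C'$2-B$2)*(B$2-A$2) = 0"
      using hC by (auto simp: perp_line_at_def inner2)
    have h1: "u1*x1+u2*x2 = x1*x1+x2*x2" using p1 unfolding u1_def u2_def x1_def x2_def by algebra
    have h2: "u1*(y1-x1)+u2*(y2-x2) = (y1*y1+y2*y2) - (x1*y1+x2*y2)"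
      using p2 unfolding u1_def u2_def x1_def x2_def y1_def y2_def by algebra
    have h3: "v1*(y1-x1)+v2*(y2-x2) = (y1*y1+y2*y2) - (x1*y1+x2*y2)"
      using p3 unfolding v1_def v2_def x1_def x2_def y1_def y2_def by algebra
    have h4: "v1*y1+v2*y2 = 0" using p4 unfolding v1_def v2_def y1_def y2_def by algebra
    have h5: "w1*y1+w2*y2 = 0" using p5 unfolding w1_def w2_def y1_def y2_def by algebra
    have h6: "w1*x1+w2*x2 = x1*x1+x2*x2" using p6 unfolding w1_def w2_def x1_def x2_def by algebra
    note F = alg[of x1 y2 x2 y1 u1 u2 v1 v2 w1 w2, OF _ h1 h2 h3 h4 h5 h6, folded D_def P_def Q_def R_def K_def, OF D0]
    define dsa where "dsa = (v1-u1)*(w2-u2)-(v2-u2)*(w1-u1)"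
    have dsaD: "dsa*D = K^2" using F(1) unfolding dsa_def .
    have D2: "D^2 > 0" using D0 by simp
    have areaABC: "tri_area A B C = \<bar>D\<bar>/2"
      unfolding tri_area_def D_def x1_def x2_def y1_def y2_def by simp
    have areaA': "tri_area A' B' C' = \<bar>dsa\<bar>/2"
      unfolding tri_area_def dsa_def u1_def u2_def v1_def v2_def w1_def w2_def by simp
    have dsa_eq: "dsa = K^2/D" using dsaD D0 by (simp add: field_simps)
    define r where "r = K^2/D^2"
    have ratio: "tri_area A' B' C' / tri_area A B C = r"
      unfolding areaABC areaA' dsa_eq r_def using D0 by (simp add: power2_eq_square abs_mult)
    have sos4: "4*(K^2 - 3*D^2) = 3*(P-Q)^2 + (P+Q-4*R)^2"
      unfolding K_def D_def P_def Q_def R_def by algebra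
    have r3: "r - 3 = (K^2 - 3*D^2)/D^2" unfolding r_def using D2 by (simp add: field_simps)
    have ge: "r \<ge> 3"
    proof -
      have "4*(K^2 - 3*D^2) \<ge> 0" unfolding sos4 by simp
      then have "K^2 - 3*D^2 \<ge> 0" by simp
      then have "(K^2 - 3*D^2)/D^2 \<ge> 0" using D2 by simp
      then show ?thesis using r3 by simp
    qed
    have dAB: "(dist A B)^2 = P" unfolding dist2 P_def x1_def x2_def by algebra
    have dBC: "(dist B C)^2 = P+Q-2*R" unfolding dist2 P_def Q_def R_def x1_def x2_def y1_def y2_def by algebra
    have dCA: "(dist C A)^2 = Q" unfolding dist2 Q_def y1_def y2_def by algebra
    have sqeq: "\<And>a b :: real. a \<ge> 0 \<Longrightarrow> b \<ge> 0 \<Longrightarrow> (a = b \<longleftrightarrow> a^2 = b^2)"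
      by (metis power2_eq_iff_nonneg)
    have equi: "equilateral A B C \<longleftrightarrow> P = P+Q-2*R \<and> P+Q-2*R = Q"
      unfolding equilateral_def using sqeq[of "dist A B" "dist B C"] sqeq[of "dist B C" "dist C A"] dAB dBC dCA
      by simp
    have eq3: "r = 3 \<longleftrightarrow> equilateral A B C"
    proof -
      have "r = 3 \<longleftrightarrow> K^2 - 3*D^2 = 0" using r3 D2 by auto
      also have "\<dots> \<longleftrightarrow> P - Q = 0 \<and> P+Q-4*R = 0"
      proof -
        have "3*(P-Q)^2 + (P+Q-4*R)^2 = 0 \<longleftrightarrow> 3*(P-Q)^2 = 0 \<and> (P+Q-4*R)^2 = 0"
          by (rule add_nonneg_eq_0_iff) simp_all
        moreover have "K^2 - 3*D^2 = 0 \<longleftrightarrow> 4*(K^2 - 3*D^2) = 0" by simp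
        ultimately show ?thesis unfolding sos4 by simp
      qed
      also have "\<dots> \<longleftrightarrow> equilateral A B C" unfolding equi by linarith
      finally show ?thesis .
    qed
    have eqA': "equilateral A' B' C'" if e: "equilateral A B C"
    proof -
      have PQ: "P = Q" "P+Q-2*R = Q" using e equi by auto
      have dA'B': "(dist A' B')^2 * D^2 = K^2 * ((y1-x1)^2+(y2-x2)^2)"
        using F(3) unfolding dist2 u1_def u2_def v1_def v2_def by (simp add: algebra_simps)
      have dB'C': "(dist B' C')^2 * D^2 = K^2 * Q"
        using F(2) unfolding dist2 w1_def w2_def v1_def v2_def by (simp add: algebra_simps)
      have dC'A': "(dist C' A')^2 * D^2 = K^2 * P"
        using F(4) unfolding dist_commute[of C' A'] dist2 u1_def u2_def w1_def w2_def by (simp add: algebra_simps)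
      have yx: "(y1-x1)^2+(y2-x2)^2 = P+Q-2*R" unfolding P_def Q_def R_def by algebra
      have canc: "\<And>a b. a*D^2 = b*D^2 \<Longrightarrow> a = b" using D2 by simp
      have "(dist A' B')^2 * D^2 = K^2*Q" by (simp only: dA'B' yx PQ(2))
      also have "\<dots> = (dist B' C')^2 * D^2" using dB'C' by simp
      finally have e1: "(dist A' B')^2 = (dist B' C')^2" by (rule canc)
      have "(dist B' C')^2 * D^2 = K^2*P" by (simp only: dB'C' PQ(1))
      also have "\<dots> = (dist C' A')^2 * D^2" using dC'A' by simp
      finally have e2: "(dist B' C')^2 = (dist C' A')^2" by (rule canc)
      have "dist A' B' = dist B' C'" by (metis e1 power2_eq_iff_nonneg zero_le_dist)
      moreover have "dist B' C' = dist C' A'" by (metis e2 power2_eq_iff_nonneg zero_le_dist)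
      ultimately show ?thesis unfolding equilateral_def by (rule conjI)
    qed
    show ?thesis using ratio ge eq3 eqA' by simp
  qed
  define s :: real where "s = sqrt 3"
  have s2: "s * s = 3" unfolding s_def by simp
  have s0: "s \<noteq> 0" unfolding s_def by simp
  define A :: "real^2" where "A = vector [0,0]"
  define B :: "real^2" where "B = vector [2,0]"
  define C :: "real^2" where "C = vector [1,s]"
  define A' :: "real^2" where "A' = vector [2,4/s]"
  define B' :: "real^2" where "B' = vector [-1,1/s]"
  define C' :: "real^2" where "C' = vector [2,-2/s]"
  have nc: "\<not> collinear {A, B, C}" unfolding collinear2 A_def B_def C_def using s0 by simp
  have hA: "A' \<in> perp_line_at A B \<inter> perp_line_at B C"
    unfolding perp_line_at_def A_def B_def C_def A'_def using s0 s2
    by (simp add: inner2 field_simps)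
  have hB: "B' \<in> perp_line_at B C \<inter> perp_line_at C A"
    unfolding perp_line_at_def A_def B_def C_def B'_def using s0 s2
    by (simp add: inner2 field_simps)
  have hC: "C' \<in> perp_line_at C A \<inter> perp_line_at A B"
    unfolding perp_line_at_def A_def B_def C_def C'_def using s0 s2
    by (simp add: inner2 field_simps)
  have eq: "equilateral A B C"
  proof -
    have "(dist A B)^2 = 4" "(dist B C)^2 = 4" "(dist C A)^2 = 4"
      unfolding dist2 A_def B_def C_def using s2 by (simp_all add: power2_eq_square)
    then have "dist A B = 2" "dist B C = 2" "dist C A = 2"
      using power2_eq_iff_nonneg[of "dist A B" 2] power2_eq_iff_nonneg[of "dist B C" 2]
        power2_eq_iff_nonneg[of "dist C A" 2] by simp_all
    then show ?thesis unfolding equilateral_def by simp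
  qed
  have "tri_area A' B' C' / tri_area A B C = 3" using part1[OF nc hA hB hC] eq by simp
  then show ?thesis using part1 nc hA hB hC by blast
qed

end
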